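(* For every election $(V,A,\succ)$ with $n=|V|\ge 1$ voters, every integer $k\ge 1$ and every $\beta\in[0,1]$, there exists a set $C\subseteq A$ with $|C|\le k$ that is $\big(\beta+(1-\beta)^k\big)$-undominated, i.e. for every $a\in A\setminus C$, $$\big|\{v\in V: a\succ_v C\}\big|\le \big\lfloor (\beta+(1-\beta)^k)\, n\big\rfloor .$$
   Context: An election $(V,A,\succ)$ consists of a finite nonempty set $V$ of $n$ voters, a finite nonempty set $A$ of candidates, and for each voter $v$ a strict linear order $\succ_v$ on $A$; $a\succeq_v b$ means $a=b$ or $a\succ_v b$. For $C\subseteq A$ and $a\in A\setminus C$, $a\succ_v C$ means $a\succ_v c$ for all $c\in C$. For $\alpha\ge 0$, a set $C\subseteq A$ is $\alpha$-undominated if $|\{v\in V: a\succ_v C\}|\le\lfloor \alpha n\rfloor$ for every $a\in A\setminus C$. *)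

theory Defs
  imports Complex_Main
begin

text \<open>An election: finite nonempty voter set V, finite nonempty candidate set A,
  and for each voter v a strict linear order P v on A (pairs (a,b) mean a is preferred to b).\<close>
definition election :: "'v set \<Rightarrow> 'a set \<Rightarrow> ('v \<Rightarrow> ('a \<times> 'a) set) \<Rightarrow> bool" where
  "election V A P \<longleftrightarrow> finite V \<and> V \<noteq> {} \<and> finite A \<and> A \<noteq> {} \<and>
     (\<forall>v\<in>V. strict_linear_order_on A (P v) \<and> P v \<subseteq> A \<times> A)"

definition prefers_over_set :: "('v \<Rightarrow> ('a \<times> 'a) set) \<Rightarrow> 'v \<Rightarrow> 'a \<Rightarrow> 'a set \<Rightarrow> bool" where
  "prefers_over_set P v a C \<longleftrightarrow> (\<forall>c\<in>C. (a, c) \<in> P v)"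

definition undominated :: "'v set \<Rightarrow> 'a set \<Rightarrow> ('v \<Rightarrow> ('a \<times> 'a) set) \<Rightarrow> real \<Rightarrow> 'a set \<Rightarrow> bool" where
  "undominated V A P \<alpha> C \<longleftrightarrow> C \<subseteq> A \<and>
     (\<forall>a\<in>A - C. int (card {v\<in>V. prefers_over_set P v a C}) \<le> \<lfloor>\<alpha> * real (card V)\<rfloor>)"

end

theory Submission
  imports Defs "HOL-Analysis.Brouwer_Fixpoint"
begin

definition upset :: "'a set \<Rightarrow> ('a \<times> 'a) set \<Rightarrow> 'a \<Rightarrow> 'a set" where
  "upset A r b = {c\<in>A. c = b \<or> (c, b) \<in> r}"

definition mass :: "'a set \<Rightarrow> ('a \<times> 'a) set \<Rightarrow> ('a \<Rightarrow> real) \<Rightarrow> 'a \<Rightarrow> real" where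
  "mass A r p b = (\<Sum>c\<in>upset A r b. p c)"

lemma slo_asym:
  assumes "strict_linear_order_on A r" "(x,y) \<in> r" shows "(y,x) \<notin> r"
  using assms unfolding strict_linear_order_on_def trans_def irrefl_def by blast

lemma lowest_exists:
  assumes slo: "strict_linear_order_on A r" and "finite S" "S \<noteq> {}" "S \<subseteq> A"
  shows "\<exists>b\<in>S. \<forall>c\<in>S. c = b \<or> (c, b) \<in> r"
  using assms(2,3,4)
proof (induction S rule: finite_ne_induct)
  case (singleton x) then show ?case by auto
next
  case (insert x F)
  then obtain b where b: "b \<in> F" "\<forall>c\<in>F. c = b \<or> (c, b) \<in> r" by auto
  have xA: "x \<in> A" using insert.prems by auto
  have bA: "b \<in> A" using insert.prems b(1) by auto
  have tot0: "total_on A r" and tr: "trans r"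
    using slo unfolding strict_linear_order_on_def by auto
  have tot: "x = b \<or> (x,b) \<in> r \<or> (b,x) \<in> r"
    using tot0 xA bA unfolding total_on_def by blast
  show ?case
  proof (cases "(b,x) \<in> r")
    case True
    have "\<forall>c\<in>insert x F. c = x \<or> (c, x) \<in> r"
    proof
      fix c assume "c \<in> insert x F"
      then have "c = x \<or> c \<in> F" by auto
      then show "c = x \<or> (c, x) \<in> r"
      proof
        assume "c \<in> F"
        then have "c = b \<or> (c, b) \<in> r" using b(2) by auto
        then show ?thesis
        proof
          assume "c = b" then show ?thesis using True by auto
        next
          assume cb: "(c, b) \<in> r" have "(c, x) \<in> r" by (rule transD[OF tr cb True])
          then show ?thesis by auto
        qed
      qed auto
    qed
    then show ?thesis by auto
  next
    case False
    then have "x = b \<or> (x, b) \<in> r" using tot by auto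
    then have "\<forall>c\<in>insert x F. c = b \<or> (c, b) \<in> r" using b(2) by auto
    then show ?thesis using b(1) by auto
  qed
qed

lemma highest_exists:
  assumes slo: "strict_linear_order_on A r" and "finite S" "S \<noteq> {}" "S \<subseteq> A"
  shows "\<exists>b\<in>S. \<forall>c\<in>S. c = b \<or> (b, c) \<in> r"
proof -
  have slo': "strict_linear_order_on A (r\<inverse>)"
    using slo unfolding strict_linear_order_on_def by (auto simp: trans_def irrefl_def total_on_def)
  show ?thesis using lowest_exists[OF slo' assms(2,3,4)] by auto
qed

lemma voter_avg:
  assumes slo: "strict_linear_order_on A r" and fin: "finite A"
    and pnn: "\<And>c. c \<in> A \<Longrightarrow> p c \<ge> 0" and gam: "\<gamma> > 0"
  shows "(\<Sum>b\<in>{b\<in>A. mass A r p b < \<gamma>}. p b) < \<gamma>"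
proof (cases "{b\<in>A. mass A r p b < \<gamma>} = {}")
  case True then show ?thesis unfolding True using gam by simp
next
  case False
  let ?S = "{b\<in>A. mass A r p b < \<gamma>}"
  obtain b where b: "b \<in> ?S" "\<forall>c\<in>?S. c = b \<or> (c, b) \<in> r"
    using lowest_exists[OF slo _ False] fin by auto
  have sub: "?S \<subseteq> upset A r b" using b unfolding upset_def by auto
  have "(\<Sum>b\<in>?S. p b) \<le> (\<Sum>c\<in>upset A r b. p c)"
    by (rule sum_mono2) (use fin pnn sub in \<open>auto simp: upset_def\<close>)
  also have "\<dots> < \<gamma>" using b(1) unfolding mass_def by auto
  finally show ?thesis .
qed

lemma sum_card_swap:
  assumes "finite A" "finite V"
  shows "(\<Sum>b\<in>A. p b * real (card {v\<in>V. Q v b})) = (\<Sum>v\<in>V. \<Sum>b\<in>{b\<in>A. Q v b}. p b)"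
proof -
  have "(\<Sum>b\<in>A. p b * real (card {v\<in>V. Q v b})) = (\<Sum>b\<in>A. \<Sum>v\<in>V. if Q v b then p b else 0)"
    using assms by (simp add: sum.If_cases mult.commute Int_def)
  also have "\<dots> = (\<Sum>v\<in>V. \<Sum>b\<in>A. if Q v b then p b else 0)" by (rule sum.swap)
  also have "\<dots> = (\<Sum>v\<in>V. \<Sum>b\<in>{b\<in>A. Q v b}. p b)"
    using assms by (simp add: sum.If_cases Int_def conj_commute)
  finally show ?thesis .
qed

lemma total_avg:
  assumes el: "election V A P"
    and pnn: "\<And>c. c \<in> A \<Longrightarrow> p c \<ge> 0" and gam: "\<gamma> > 0"
  shows "(\<Sum>b\<in>A. p b * real (card {v\<in>V. mass A (P v) p b < \<gamma>})) < real (card V) * \<gamma>"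
proof -
  have fV: "finite V" "V \<noteq> {}" and fA: "finite A" using el unfolding election_def by auto
  have "(\<Sum>b\<in>A. p b * real (card {v\<in>V. mass A (P v) p b < \<gamma>}))
      = (\<Sum>v\<in>V. \<Sum>b\<in>{b\<in>A. mass A (P v) p b < \<gamma>}. p b)"
    by (rule sum_card_swap[OF fA fV(1)])
  also have "\<dots> < (\<Sum>v\<in>V. \<gamma>)"
  proof (rule sum_strict_mono)
    fix v assume "v \<in> V"
    then have "strict_linear_order_on A (P v)" using el unfolding election_def by auto
    then show "(\<Sum>b\<in>{b\<in>A. mass A (P v) p b < \<gamma>}. p b) < \<gamma>"
      using voter_avg fA pnn gam by blast
  qed (use fV in auto)
  also have "\<dots> = real (card V) * \<gamma>" by simp
  finally show ?thesis .
qed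


lemma greedy_step:
  assumes fA: "finite A" "A \<noteq> {}" and pnn: "\<And>c. c \<in> A \<Longrightarrow> p c \<ge> 0"
    and p1: "(\<Sum>c\<in>A. p c) = 1" and fR: "finite R"
    and cov: "\<And>v. v \<in> R \<Longrightarrow> U v \<subseteq> A \<and> (\<Sum>c\<in>U v. p c) \<ge> \<theta>"
  shows "\<exists>c\<in>A. real (card {v\<in>R. c \<in> U v}) \<ge> \<theta> * real (card R)"
proof -
  define X where "X c = real (card {v\<in>R. c \<in> U v})" for c
  have "(\<Sum>c\<in>A. p c * X c) = (\<Sum>v\<in>R. \<Sum>c\<in>{c\<in>A. c \<in> U v}. p c)"
    unfolding X_def by (rule sum_card_swap[OF fA(1) fR])
  also have "\<dots> \<ge> (\<Sum>v\<in>R. \<theta>)"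
  proof (rule sum_mono)
    fix v assume "v \<in> R"
    then have "U v \<subseteq> A" "(\<Sum>c\<in>U v. p c) \<ge> \<theta>" using cov by auto
    moreover have "{c\<in>A. c \<in> U v} = U v" using \<open>U v \<subseteq> A\<close> by auto
    ultimately show "\<theta> \<le> (\<Sum>c\<in>{c\<in>A. c \<in> U v}. p c)" by simp
  qed
  finally have low: "(\<Sum>c\<in>A. p c * X c) \<ge> \<theta> * real (card R)" by (simp add: mult.commute)
  define M where "M = Max (X ` A)"
  have M: "M \<in> X ` A" unfolding M_def using fA by (intro Max_in) auto
  have "(\<Sum>c\<in>A. p c * X c) \<le> (\<Sum>c\<in>A. p c * M)"
  proof (rule sum_mono)
    fix c assume "c \<in> A"
    then have "X c \<le> M" unfolding M_def using fA by (intro Max_ge) auto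
    then show "p c * X c \<le> p c * M" using pnn[OF \<open>c \<in> A\<close>] by (simp add: mult_left_mono)
  qed
  also have "\<dots> = M" using p1 by (simp add: sum_distrib_right[symmetric])
  finally have "\<theta> * real (card R) \<le> M" using low by simp
  then show ?thesis using M unfolding X_def by auto
qed

lemma greedy:
  assumes fA: "finite A" "A \<noteq> {}" and pnn: "\<And>c. c \<in> A \<Longrightarrow> p c \<ge> 0"
    and p1: "(\<Sum>c\<in>A. p c) = 1" and fV: "finite V"
    and cov: "\<And>v. v \<in> V \<Longrightarrow> U v \<subseteq> A \<and> (\<Sum>c\<in>U v. p c) \<ge> \<theta>"
    and th1: "\<theta> \<le> 1"
  shows "\<exists>C\<subseteq>A. card C \<le> k \<and> real (card {v\<in>V. U v \<inter> C = {}}) \<le> (1 - \<theta>) ^ k * real (card V)"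
proof (induction k)
  case 0
  show ?case by (intro exI[of _ "{}"]) auto
next
  case (Suc k)
  then obtain C where C: "C \<subseteq> A" "card C \<le> k"
    "real (card {v\<in>V. U v \<inter> C = {}}) \<le> (1 - \<theta>) ^ k * real (card V)" by blast
  define R where "R = {v\<in>V. U v \<inter> C = {}}"
  have fR: "finite R" using fV unfolding R_def by auto
  obtain c where c: "c \<in> A" "real (card {v\<in>R. c \<in> U v}) \<ge> \<theta> * real (card R)"
    using greedy_step[OF fA pnn p1 fR, of U \<theta>] cov unfolding R_def by auto
  have eq: "{v\<in>V. U v \<inter> insert c C = {}} = R - {v\<in>R. c \<in> U v}" unfolding R_def by auto
  have "card (R - {v\<in>R. c \<in> U v}) = card R - card {v\<in>R. c \<in> U v}"
    by (rule card_Diff_subset) (use fR in auto)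
  moreover have "card {v\<in>R. c \<in> U v} \<le> card R" by (rule card_mono[OF fR]) auto
  ultimately have "real (card (R - {v\<in>R. c \<in> U v})) = real (card R) - real (card {v\<in>R. c \<in> U v})"
    by simp
  also have "\<dots> \<le> (1 - \<theta>) * real (card R)" using c(2) by (simp add: algebra_simps)
  also have "\<dots> \<le> (1 - \<theta>) * ((1 - \<theta>) ^ k * real (card V))"
    using C(3) th1 unfolding R_def by (intro mult_left_mono) auto
  finally have "real (card {v\<in>V. U v \<inter> insert c C = {}}) \<le> (1 - \<theta>) ^ Suc k * real (card V)"
    unfolding eq by simp
  moreover have "card (insert c C) \<le> Suc k"
    using C(2) card_insert_le_m1 by (metis card_insert_if finite_subset fA(1) C(1) le_SucI Suc_le_mono)
  ultimately show ?case using C(1) c(1) by (intro exI[of _ "insert c C"]) auto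
qed


lemma frac_close:
  fixes Sx Sr Nx Nr M \<delta> :: real
  assumes "0 < Sx" "Sx \<le> Sr" "Sr \<le> Sx + M" "0 \<le> Nx" "Nx \<le> Nr" "Nr \<le> Nx + M"
    "Nx \<le> Sx" "M \<le> \<delta> * Sx" "0 \<le> M"
  shows "Nr / Sr \<le> Nx / Sx + \<delta>" "Nx / Sx \<le> Nr / Sr + \<delta>"
proof -
  have Sr0: "Sr > 0" using assms by linarith
  have "Nr / Sr \<le> Nr / Sx" using assms Sr0 by (intro divide_left_mono) auto
  also have "\<dots> \<le> (Nx + M) / Sx" using assms by (intro divide_right_mono) auto
  also have "\<dots> = Nx / Sx + M / Sx" by (simp add: add_divide_distrib)
  also have "M / Sx \<le> \<delta>" using assms by (simp add: divide_le_eq)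
  finally show "Nr / Sr \<le> Nx / Sx + \<delta>" by simp
  have "Nx / (Sx + M) \<le> Nr / Sr"
  proof -
    have "Nx / (Sx + M) \<le> Nx / Sr" using assms Sr0 by (intro divide_left_mono) auto
    also have "\<dots> \<le> Nr / Sr" using assms Sr0 by (intro divide_right_mono) auto
    finally show ?thesis .
  qed
  moreover have "Nx / Sx - Nx / (Sx + M) \<le> \<delta>"
  proof -
    have "Nx / Sx - Nx / (Sx + M) = Nx * M / (Sx * (Sx + M))"
      using assms by (simp add: field_simps)
    also have "\<dots> \<le> Sx * M / (Sx * (Sx + M))"
      using assms by (intro divide_right_mono mult_right_mono) auto
    also have "\<dots> = M / (Sx + M)" using assms by simp
    also have "\<dots> \<le> M / Sx" using assms by (intro divide_left_mono) auto
    also have "\<dots> \<le> \<delta>" using assms by (simp add: divide_le_eq)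
    finally show ?thesis .
  qed
  ultimately show "Nx / Sx \<le> Nr / Sr + \<delta>" by linarith
qed


lemma quantile_dist:
  assumes el: "election V A P" and b0: "0 < \<beta>" and e0: "0 < \<epsilon>0"
  shows "\<exists>p \<delta>. 0 < \<delta> \<and> \<delta> \<le> \<epsilon>0 \<and> (\<forall>c\<in>A. p c \<ge> 0) \<and> (\<Sum>c\<in>A. p c) = 1 \<and>
     (\<forall>b\<in>A. real (card {v\<in>V. mass A (P v) p b < \<beta> - \<delta>}) \<le> \<beta> * real (card V))"
proof -
  have fV: "finite V" "V \<noteq> {}" and fA: "finite A" "A \<noteq> {}"
    using el unfolding election_def by auto
  define n where "n = card V"
  define m where "m = card A"
  have n1: "n \<ge> 1" using fV unfolding n_def by (simp add: Suc_leI card_gt_0_iff)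
  have m1: "m \<ge> 1" using fA unfolding m_def by (simp add: Suc_leI card_gt_0_iff)
  obtain e where e: "bij_betw e {0..<m} A" using ex_bij_betw_nat_finite[OF fA(1)] unfolding m_def by blast
  define idx where "idx = the_inv_into {0..<m} e"
  have idx1: "idx a < m" "e (idx a) = a" if "a \<in> A" for a
    using that e unfolding idx_def
    by (auto simp: bij_betw_def the_inv_into_f_f f_the_inv_into_f the_inv_into_into)
  have idx2: "idx (e j) = j" "e j \<in> A" if "j < m" for j
    using that e unfolding idx_def by (auto simp: bij_betw_def the_inv_into_f_f)
  define Kr :: real where "Kr = of_int \<lfloor>\<beta> * real n\<rfloor> + 1"
  define g where "g = Kr - \<beta> * real n"
  have g0: "g > 0" unfolding g_def Kr_def by linarith
  have Kr0: "Kr > 0"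
  proof -
    have "0 \<le> \<beta> * real n" using b0 by simp
    then have "0 \<le> \<lfloor>\<beta> * real n\<rfloor>" by simp
    then show ?thesis unfolding Kr_def by linarith
  qed
  have Kr_int: "real c \<ge> Kr" if "real c > \<beta> * real n" for c :: nat
  proof -
    have "of_int \<lfloor>\<beta> * real n\<rfloor> < real c" using that by linarith
    then have "\<lfloor>\<beta> * real n\<rfloor> < int c" by linarith
    then have "\<lfloor>\<beta> * real n\<rfloor> + 1 \<le> int c" by linarith
    then show ?thesis unfolding Kr_def by linarith
  qed
  have "\<exists>D::nat. max 1 (max (1 / \<epsilon>0) (2 * real n / g)) \<le> real D" by (rule real_arch_simple)
  then obtain D :: nat where D: "real D \<ge> max 1 (max (1 / \<epsilon>0) (2 * real n / g))" by (elim exE)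
  have D1: "real D \<ge> 1" and De: "real D \<ge> 1 / \<epsilon>0" and Dg: "real D \<ge> 2 * real n / g"
    using D by auto
  define \<delta> :: real where "\<delta> = 1 / real D"
  have d0: "\<delta> > 0" unfolding \<delta>_def using D1 by simp
  have de: "\<delta> \<le> \<epsilon>0" unfolding \<delta>_def using De e0 D1
    by (simp add: divide_le_eq field_simps)
  have dg: "real n * \<delta> \<le> g / 2" unfolding \<delta>_def using Dg g0 D1
    by (simp add: field_simps)
  have "\<exists>G0::nat. 2 * Kr * real m * real D / g \<le> real G0" by (rule real_arch_simple)
  then obtain G0 :: nat where G0: "real G0 \<ge> 2 * Kr * real m * real D / g" by (elim exE)
  define G where "G = G0 + 2"
  have G0p: "0 < G" unfolding G_def by simp
  define S where "S x = (\<Sum>j<m. real (x j)) + real m * real D" for x :: "nat \<Rightarrow> nat"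
  define pp where "pp x a = (real (x (idx a)) + real D) / S x" for x a
  have S0: "S x \<ge> real m * real D" for x unfolding S_def by (simp add: sum_nonneg)
  have mD1: "real m * real D \<ge> 1"
  proof -
    have "real m \<ge> 1" using m1 by simp
    then have "real m * real D \<ge> 1 * 1" using D1 by (intro mult_mono) auto
    then show ?thesis by simp
  qed
  have Spos: "S x > 0" for x using S0[of x] mD1 by linarith
  have pp_nn: "pp x a \<ge> 0" for x a unfolding pp_def using Spos[of x] by simp
  have sumA: "(\<Sum>a\<in>W. f (idx a)) \<le> (\<Sum>j<m. f j)" if "W \<subseteq> A" "\<And>j. f j \<ge> 0" for W and f :: "nat \<Rightarrow> real"
  proof -
    have "(\<Sum>a\<in>W. f (idx a)) \<le> (\<Sum>a\<in>A. f (idx a))"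
      by (rule sum_mono2) (use that fA in auto)
    also have "\<dots> = (\<Sum>j\<in>{0..<m}. f (idx (e j)))"
      using sum.reindex_bij_betw[OF e, of "\<lambda>a. f (idx a)"] by simp
    also have "\<dots> = (\<Sum>j<m. f j)" using idx2 by (simp add: atLeast0LessThan)
    finally show ?thesis .
  qed
  have sumA_eq: "(\<Sum>a\<in>A. f (idx a)) = (\<Sum>j<m. f j)" for f :: "nat \<Rightarrow> real"
  proof -
    have "(\<Sum>a\<in>A. f (idx a)) = (\<Sum>j\<in>{0..<m}. f (idx (e j)))"
      using sum.reindex_bij_betw[OF e, of "\<lambda>a. f (idx a)"] by simp
    also have "\<dots> = (\<Sum>j<m. f j)" using idx2 by (simp add: atLeast0LessThan)
    finally show ?thesis .
  qed
  have pp_sum: "(\<Sum>a\<in>A. pp x a) = 1" for x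
  proof -
    have "(\<Sum>a\<in>A. pp x a) = (\<Sum>a\<in>A. real (x (idx a)) + real D) / S x"
      unfolding pp_def by (rule sum_divide_distrib[symmetric])
    also have "(\<Sum>a\<in>A. real (x (idx a)) + real D) = (\<Sum>j<m. real (x j) + real D)"
      by (rule sumA_eq)
    also have "\<dots> = S x" unfolding S_def by (simp add: sum.distrib)
    finally show ?thesis using Spos[of x] by simp
  qed
  have pp_W: "(\<Sum>a\<in>W. pp x a) = ((\<Sum>a\<in>W. real (x (idx a))) + real (card W) * real D) / S x" for x W
  proof -
    have "(\<Sum>a\<in>W. pp x a) = (\<Sum>a\<in>W. real (x (idx a)) + real D) / S x"
      unfolding pp_def by (rule sum_divide_distrib[symmetric])
    also have "(\<Sum>a\<in>W. real (x (idx a)) + real D) = (\<Sum>a\<in>W. real (x (idx a))) + real (card W) * real D"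
      by (simp add: sum.distrib)
    finally show ?thesis .
  qed
  have close: "(\<Sum>a\<in>W. pp r a) \<le> (\<Sum>a\<in>W. pp x a) + \<delta> \<and> (\<Sum>a\<in>W. pp x a) \<le> (\<Sum>a\<in>W. pp r a) + \<delta>"
    if W: "W \<subseteq> A" and cell: "\<forall>j<m. x j \<le> r j \<and> r j \<le> x j + 1" for W x r
  proof -
    have fW: "finite W" using W fA finite_subset by blast
    have cW: "card W \<le> m" unfolding m_def using W fA by (simp add: card_mono)
    define Nx where "Nx = (\<Sum>a\<in>W. real (x (idx a))) + real (card W) * real D"
    define Nr where "Nr = (\<Sum>a\<in>W. real (r (idx a))) + real (card W) * real D"
    have cellW: "x (idx a) \<le> r (idx a) \<and> r (idx a) \<le> x (idx a) + 1" if "a \<in> W" for a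
    proof -
      have "a \<in> A" using W that by blast
      then have "idx a < m" by (rule idx1(1))
      then show ?thesis using cell by blast
    qed
    have "(\<Sum>a\<in>W. real (x (idx a))) \<le> (\<Sum>a\<in>W. real (r (idx a)))"
      by (rule sum_mono) (use cellW in simp)
    then have h1: "Nx \<le> Nr" unfolding Nx_def Nr_def by linarith
    have h2: "Nr \<le> Nx + real m"
    proof -
      have "(\<Sum>a\<in>W. real (r (idx a))) \<le> (\<Sum>a\<in>W. real (x (idx a)) + 1)"
      proof (rule sum_mono)
        fix a assume "a \<in> W"
        then have "r (idx a) \<le> x (idx a) + 1" using cellW by blast
        then show "real (r (idx a)) \<le> real (x (idx a)) + 1" by linarith
      qed
      also have "\<dots> = (\<Sum>a\<in>W. real (x (idx a))) + real (card W)" by (simp add: sum.distrib)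
      finally show ?thesis unfolding Nx_def Nr_def using cW by linarith
    qed
    have h3: "S x \<le> S r"
    proof -
      have "(\<Sum>j<m. real (x j)) \<le> (\<Sum>j<m. real (r j))"
      proof (rule sum_mono)
        fix j assume "j \<in> {..<m}"
        then have "j < m" by simp
        then have "x j \<le> r j" using cell by blast
        then show "real (x j) \<le> real (r j)" by simp
      qed
      then show ?thesis unfolding S_def by linarith
    qed
    have h4: "S r \<le> S x + real m"
    proof -
      have "(\<Sum>j<m. real (r j)) \<le> (\<Sum>j<m. real (x j) + 1)"
      proof (rule sum_mono)
        fix j assume "j \<in> {..<m}"
        then have "j < m" by simp
        then have "r j \<le> x j + 1" using cell by blast
        then show "real (r j) \<le> real (x j) + 1" by linarith
      qed
      also have "\<dots> = (\<Sum>j<m. real (x j)) + real m" by (simp add: sum.distrib)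
      finally show ?thesis unfolding S_def by linarith
    qed
    have h5: "Nx \<le> S x"
    proof -
      have "(\<Sum>a\<in>W. real (x (idx a))) \<le> (\<Sum>j<m. real (x j))" by (rule sumA[OF W]) auto
      moreover have "real (card W) * real D \<le> real m * real D"
        using cW by (intro mult_right_mono) auto
      ultimately show ?thesis unfolding Nx_def S_def by linarith
    qed
    have h6: "real m \<le> \<delta> * S x"
    proof -
      have "\<delta> * S x \<ge> \<delta> * (real m * real D)" using S0[of x] d0 by (intro mult_left_mono) auto
      moreover have "\<delta> * (real m * real D) = real m" unfolding \<delta>_def using D1 by simp
      ultimately show ?thesis by simp
    qed
    have h7: "0 \<le> Nx" unfolding Nx_def by (simp add: sum_nonneg)
    have h8: "0 \<le> real m" by simp
    note fc = frac_close[OF Spos[of x] h3 h4 h7 h1 h2 h5 h6 h8]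
    have e1: "(\<Sum>a\<in>W. pp r a) = Nr / S r" unfolding pp_W Nr_def ..
    have e2: "(\<Sum>a\<in>W. pp x a) = Nx / S x" unfolding pp_W Nx_def ..
    show ?thesis unfolding e1 e2 using fc by (intro conjI)
  qed
  have upsetA: "upset A (P v) b \<subseteq> A" for v b unfolding upset_def by auto
  have mclose: "mass A (P v) (pp r) b \<le> mass A (P v) (pp x) b + \<delta> \<and> mass A (P v) (pp x) b \<le> mass A (P v) (pp r) b + \<delta>"
    if "\<forall>j<m. x j \<le> r j \<and> r j \<le> x j + 1" for v b x r
    unfolding mass_def using close[OF upsetA that] .
  define viol where "viol x i \<longleftrightarrow> real (card {v\<in>V. mass A (P v) (pp x) (e i) < \<beta>}) > \<beta> * real n" for x i
  define label where "label x i = (if x i = 0 then 0 else if x i = G then 1 else if viol x i then 0 else (1::nat))" for x i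
  obtain q where q: "\<forall>i<m. q i < G"
    and qc: "\<forall>i<m. \<exists>r s. (\<forall>j<m. q j \<le> r j \<and> r j \<le> q j + 1) \<and> (\<forall>j<m. q j \<le> s j \<and> s j \<le> q j + 1) \<and> label r i \<noteq> label s i"
  proof -
    have l1: "\<forall>x. (\<forall>i<m. x i \<le> G) \<longrightarrow> (\<forall>i<m. label x i = 0 \<or> label x i = 1)"
      unfolding label_def by simp
    have l2: "\<forall>x. (\<forall>i<m. x i \<le> G) \<longrightarrow> (\<forall>i<m. x i = 0 \<longrightarrow> label x i = 0)"
      unfolding label_def by simp
    have l3: "\<forall>x. (\<forall>i<m. x i \<le> G) \<longrightarrow> (\<forall>i<m. x i = G \<longrightarrow> label x i = 1)"
      unfolding label_def G_def by simp
    show ?thesis by (rule kuhn_lemma[OF G0p l1 l2 l3]) (rule that; assumption)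
  qed
  have lab1: "\<exists>r. (\<forall>j<m. q j \<le> r j \<and> r j \<le> q j + 1) \<and> r i \<noteq> 0 \<and> (r i = G \<or> \<not> viol r i)"
    and lab0: "\<exists>s. (\<forall>j<m. q j \<le> s j \<and> s j \<le> q j + 1) \<and> (s i = 0 \<or> (s i \<noteq> G \<and> viol s i))"
    if im: "i < m" for i
  proof -
    obtain r s where rs: "\<forall>j<m. q j \<le> r j \<and> r j \<le> q j + 1" "\<forall>j<m. q j \<le> s j \<and> s j \<le> q j + 1"
      "label r i \<noteq> label s i" using qc[rule_format, OF im] by (elim exE conjE) blast
    have "(label r i = 1 \<and> label s i = 0) \<or> (label r i = 0 \<and> label s i = 1)"
      using rs(3) unfolding label_def by (auto split: if_splits)
    then show "\<exists>r. (\<forall>j<m. q j \<le> r j \<and> r j \<le> q j + 1) \<and> r i \<noteq> 0 \<and> (r i = G \<or> \<not> viol r i)"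
      "\<exists>s. (\<forall>j<m. q j \<le> s j \<and> s j \<le> q j + 1) \<and> (s i = 0 \<or> (s i \<noteq> G \<and> viol s i))"
      using rs(1,2) unfolding label_def by (auto split: if_splits)
  qed
  define y where "y = pp q"
  have main: "real (card {v\<in>V. mass A (P v) y b < \<beta> - \<delta>}) \<le> \<beta> * real n" if bA: "b \<in> A" for b
  proof (rule ccontr)
    assume contra: "\<not> ?thesis"
    define i0 where "i0 = idx b"
    have i0: "i0 < m" "e i0 = b" using idx1[OF bA] unfolding i0_def by auto
    obtain r where r: "\<forall>j<m. q j \<le> r j \<and> r j \<le> q j + 1" "r i0 \<noteq> 0" "r i0 = G \<or> \<not> viol r i0"
      using lab1[OF i0(1)] by blast
    have "{v\<in>V. mass A (P v) y b < \<beta> - \<delta>} \<subseteq> {v\<in>V. mass A (P v) (pp r) (e i0) < \<beta>}"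
    proof
      fix v assume "v \<in> {v\<in>V. mass A (P v) y b < \<beta> - \<delta>}"
      then have v: "v \<in> V" "mass A (P v) y b < \<beta> - \<delta>" by auto
      have "mass A (P v) (pp r) b \<le> mass A (P v) (pp q) b + \<delta>" using mclose[OF r(1), of v b] by (rule conjunct1)
      then have "mass A (P v) (pp r) (e i0) < \<beta>" using v(2) i0(2) unfolding y_def by simp
      then show "v \<in> {v\<in>V. mass A (P v) (pp r) (e i0) < \<beta>}" using v(1) by simp
    qed
    then have "card {v\<in>V. mass A (P v) y b < \<beta> - \<delta>} \<le> card {v\<in>V. mass A (P v) (pp r) (e i0) < \<beta>}"
      using fV by (intro card_mono) auto
    then have "viol r i0" using contra unfolding viol_def n_def by linarith
    then have "r i0 = G" using r(3) by blast
    then have qi0: "q i0 + 1 \<ge> G" using r(1) i0(1) by auto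
    define \<gamma> where "\<gamma> = \<beta> + \<delta>"
    have heavy: "real (card {v\<in>V. mass A (P v) y a < \<gamma>}) \<ge> Kr" if ha: "a \<in> A" "q (idx a) \<ge> 1" for a
    proof -
      obtain s where s: "\<forall>j<m. q j \<le> s j \<and> s j \<le> q j + 1" "s (idx a) = 0 \<or> (s (idx a) \<noteq> G \<and> viol s (idx a))"
        using lab0[OF idx1(1)[OF ha(1)]] by blast
      have "s (idx a) \<ge> 1" using s(1) that idx1 by (meson order_trans)
      then have "viol s (idx a)" using s(2) by auto
      moreover have "{v\<in>V. mass A (P v) (pp s) (e (idx a)) < \<beta>} \<subseteq> {v\<in>V. mass A (P v) y a < \<gamma>}"
      proof
        fix v assume "v \<in> {v\<in>V. mass A (P v) (pp s) (e (idx a)) < \<beta>}"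
        then have v: "v \<in> V" "mass A (P v) (pp s) a < \<beta>" using idx1[OF that(1)] by auto
        have "mass A (P v) (pp q) a \<le> mass A (P v) (pp s) a + \<delta>" using mclose[OF s(1), of v a] by (rule conjunct2)
        then have "mass A (P v) y a < \<gamma>" using v(2) unfolding y_def \<gamma>_def by simp
        then show "v \<in> {v\<in>V. mass A (P v) y a < \<gamma>}" using v(1) by simp
      qed
      then have "card {v\<in>V. mass A (P v) (pp s) (e (idx a)) < \<beta>} \<le> card {v\<in>V. mass A (P v) y a < \<gamma>}"
        using fV by (intro card_mono) auto
      ultimately have "real (card {v\<in>V. mass A (P v) y a < \<gamma>}) > \<beta> * real n"
        unfolding viol_def by linarith
      then show ?thesis using Kr_int by blast
    qed
    define z where "z a = (if q (idx a) = 0 then real D / S q else 0)" for a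
    have termwise: "y a * real (card {v\<in>V. mass A (P v) y a < \<gamma>}) \<ge> Kr * y a - Kr * z a" if "a \<in> A" for a
    proof (cases "q (idx a) = 0")
      case True
      then have "y a = z a" unfolding y_def pp_def z_def by simp
      then show ?thesis using pp_nn[of q a] unfolding y_def by simp
    next
      case False
      then have "Kr \<le> real (card {v\<in>V. mass A (P v) y a < \<gamma>})" using heavy that by simp
      then have "y a * Kr \<le> y a * real (card {v\<in>V. mass A (P v) y a < \<gamma>})"
        using pp_nn[of q a] unfolding y_def by (intro mult_left_mono) auto
      then show ?thesis using False unfolding z_def by (simp add: mult.commute)
    qed
    have "(\<Sum>a\<in>A. Kr * y a - Kr * z a) \<le> (\<Sum>a\<in>A. y a * real (card {v\<in>V. mass A (P v) y a < \<gamma>}))"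
      using termwise by (intro sum_mono) auto
    also have "\<dots> < real (card V) * \<gamma>"
      by (rule total_avg[OF el]) (use pp_nn d0 b0 in \<open>auto simp: y_def \<gamma>_def\<close>)
    finally have ineq: "Kr * (\<Sum>a\<in>A. y a) - Kr * (\<Sum>a\<in>A. z a) < real n * \<gamma>"
      unfolding n_def by (simp add: sum_subtractf sum_distrib_left)
    have ysum: "(\<Sum>a\<in>A. y a) = 1" unfolding y_def by (rule pp_sum)
    have "(\<Sum>a\<in>A. z a) \<le> (\<Sum>a\<in>A. real D / S q)"
      unfolding z_def using Spos[of q] by (intro sum_mono) auto
    also have "\<dots> = real m * real D / S q" unfolding m_def by simp
    finally have zsum: "(\<Sum>a\<in>A. z a) \<le> real m * real D / S q" .
    have Sq: "S q \<ge> real G0 + 1"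
    proof -
      have "real (q i0) \<le> (\<Sum>j<m. real (q j))"
        using i0(1) by (intro member_le_sum) auto
      moreover have "real (q i0) \<ge> real G0 + 1" using qi0 unfolding G_def by linarith
      moreover have "real m * real D \<ge> 0" by simp
      ultimately show ?thesis unfolding S_def by linarith
    qed
    have "Kr * (real m * real D / S q) \<le> g / 2"
    proof -
      have "Kr * (real m * real D / S q) = (2 * Kr * real m * real D / g) * (g / 2) / S q"
        using g0 by (simp add: field_simps)
      also have "\<dots> \<le> S q * (g / 2) / S q"
        using G0 Sq g0 Spos[of q] by (intro divide_right_mono mult_right_mono) auto
      also have "\<dots> = g / 2" using Spos[of q] by simp
      finally show ?thesis .
    qed
    moreover have "Kr * (\<Sum>a\<in>A. z a) \<le> Kr * (real m * real D / S q)"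
      using zsum Kr0 by (intro mult_left_mono) auto
    ultimately have "Kr * (\<Sum>a\<in>A. z a) \<le> g / 2" by linarith
    then have "Kr - g / 2 < real n * \<gamma>" using ineq ysum by simp
    moreover have "real n * \<gamma> \<le> \<beta> * real n + g / 2"
      using dg unfolding \<gamma>_def by (simp add: algebra_simps)
    moreover have "Kr - g / 2 = \<beta> * real n + g / 2" unfolding g_def by (simp add: field_simps)
    ultimately show False by linarith
  qed
  have f1: "\<forall>c\<in>A. y c \<ge> 0" using pp_nn unfolding y_def by blast
  have f2: "(\<Sum>c\<in>A. y c) = 1" unfolding y_def by (rule pp_sum)
  have f3: "\<forall>b\<in>A. real (card {v\<in>V. mass A (P v) y b < \<beta> - \<delta>}) \<le> \<beta> * real (card V)"
    using main unfolding n_def by blast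
  show ?thesis by (rule exI[of _ y], rule exI[of _ \<delta>]) (intro conjI d0 de f1 f2 f3)
qed


lemma pow_close:
  fixes x d :: real
  assumes "0 \<le> x" "0 \<le> d" "x + d \<le> 1"
  shows "(x + d) ^ k \<le> x ^ k + real k * d"
proof (induction k)
  case 0 then show ?case by simp
next
  case (Suc k)
  have xk: "x ^ k \<le> 1" using assms by (intro power_le_one) auto
  have "(x + d) ^ Suc k = (x + d) * (x + d) ^ k" by simp
  also have "\<dots> \<le> (x + d) * (x ^ k + real k * d)"
    using Suc assms by (intro mult_left_mono) auto
  also have "\<dots> = x ^ Suc k + d * x ^ k + (x + d) * (real k * d)" by (simp add: algebra_simps)
  also have "\<dots> \<le> x ^ Suc k + d * 1 + 1 * (real k * d)"
    using assms xk by (intro add_mono mult_left_mono mult_right_mono) auto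
  finally show ?case by (simp add: algebra_simps)
qed

lemma lin_aux:
  fixes a F x :: real
  assumes "a \<le> (F + 1 - x) / 2" "0 < F + 1 - x"
  shows "x + a < F + 1"
  using assms by (simp add: field_simps)

theorem theorem1:
  fixes V :: "'v set" and A :: "'a set" and P :: "'v \<Rightarrow> ('a \<times> 'a) set"
    and k :: nat and \<beta> :: real
  assumes "election V A P" and "k \<ge> 1" and "0 \<le> \<beta>" and "\<beta> \<le> 1"
  shows "\<exists>C. C \<subseteq> A \<and> card C \<le> k \<and> undominated V A P (\<beta> + (1 - \<beta>) ^ k) C"
proof -
  note el = assms(1)
  have fV: "finite V" "V \<noteq> {}" and fA: "finite A" "A \<noteq> {}"
    using el unfolding election_def by auto
  define n where "n = card V"
  define \<alpha> where "\<alpha> = \<beta> + (1 - \<beta>) ^ k"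
  show ?thesis
  proof (cases "0 < \<beta> \<and> \<beta> < 1")
    case False
    then have "\<beta> = 0 \<or> \<beta> = 1" using assms by auto
    then have a1: "\<beta> + (1 - \<beta>) ^ k = 1" using assms(2) by (auto simp: power_0_left)
    have "int (card {v\<in>V. prefers_over_set P v a {}}) \<le> \<lfloor>1 * real (card V)\<rfloor>" for a
    proof -
      have "card {v\<in>V. prefers_over_set P v a {}} \<le> card V" using fV by (intro card_mono) auto
      then show ?thesis by simp
    qed
    then show ?thesis unfolding undominated_def a1 by (intro exI[of _ "{}"]) auto
  next
    case True
    then have b0: "0 < \<beta>" and b1: "\<beta> < 1" by auto
    define g2 where "g2 = of_int \<lfloor>\<alpha> * real n\<rfloor> + 1 - \<alpha> * real n"
    have g2: "g2 > 0" unfolding g2_def by linarith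
    have n1: "real n \<ge> 1" using fV unfolding n_def by (simp add: Suc_leI card_gt_0_iff)
    have k1: "real k \<ge> 1" using assms(2) by simp
    define \<epsilon>0 where "\<epsilon>0 = min \<beta> (g2 / (2 * real k * real n))"
    have e0: "\<epsilon>0 > 0" unfolding \<epsilon>0_def using b0 g2 n1 k1 by simp
    obtain p \<delta> where d0: "0 < \<delta>" and de: "\<delta> \<le> \<epsilon>0" and pnn: "\<forall>c\<in>A. p c \<ge> 0"
      and p1: "(\<Sum>c\<in>A. p c) = 1"
      and pq: "\<forall>b\<in>A. real (card {v\<in>V. mass A (P v) p b < \<beta> - \<delta>}) \<le> \<beta> * real (card V)"
      using quantile_dist[OF el b0 e0] by blast
    define \<theta> where "\<theta> = \<beta> - \<delta>"
    have th1: "\<theta> \<le> 1" unfolding \<theta>_def using b1 d0 by simp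
    define U where "U v = {c\<in>A. \<forall>d\<in>A. (d, c) \<in> P v \<longrightarrow> mass A (P v) p d < \<theta>}" for v
    have cov: "U v \<subseteq> A \<and> (\<Sum>c\<in>U v. p c) \<ge> \<theta>" if vV: "v \<in> V" for v
    proof -
      have slo: "strict_linear_order_on A (P v)" and PA: "P v \<subseteq> A \<times> A"
        using el vV unfolding election_def by auto
      have tr: "trans (P v)" and ir: "irrefl (P v)" using slo unfolding strict_linear_order_on_def by auto
      have UA: "U v \<subseteq> A" unfolding U_def by auto
      have fU: "finite (U v)" using UA fA finite_subset by blast
      have "(\<Sum>c\<in>U v. p c) \<ge> \<theta>"
      proof (cases "A - U v = {}")
        case True
        then have "U v = A" using UA by auto
        then show ?thesis using p1 th1 by simp
      next
        case False
        obtain c where c: "c \<in> A - U v" "\<forall>d\<in>A - U v. d = c \<or> (c, d) \<in> P v"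
          using highest_exists[OF slo _ False] fA by auto
        obtain d where d: "d \<in> A" "(d, c) \<in> P v" "mass A (P v) p d \<ge> \<theta>"
          using c(1) unfolding U_def by auto
        have sub: "upset A (P v) d \<subseteq> U v"
        proof
          fix x assume x: "x \<in> upset A (P v) d"
          then have xA: "x \<in> A" and xd: "x = d \<or> (x, d) \<in> P v" unfolding upset_def by auto
          have xc: "(x, c) \<in> P v" using xd d(2) tr unfolding trans_def by blast
          show "x \<in> U v"
          proof (rule ccontr)
            assume "x \<notin> U v"
            then have "x = c \<or> (c, x) \<in> P v" using c(2) xA by auto
            then show False using xc ir slo_asym[OF slo xc] unfolding irrefl_def by auto
          qed
        qed
        have "\<theta> \<le> mass A (P v) p d" by (rule d(3))
        also have "\<dots> = (\<Sum>c\<in>upset A (P v) d. p c)" unfolding mass_def ..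
        also have "\<dots> \<le> (\<Sum>c\<in>U v. p c)"
          by (rule sum_mono2[OF fU sub]) (use pnn UA in auto)
        finally show ?thesis .
      qed
      then show ?thesis using UA by simp
    qed
    obtain C where C: "C \<subseteq> A" "card C \<le> k"
      "real (card {v\<in>V. U v \<inter> C = {}}) \<le> (1 - \<theta>) ^ k * real (card V)"
      using greedy[OF fA, of p V U \<theta> k] pnn p1 fV(1) cov th1 by auto
    have pw: "(1 - \<theta>) ^ k \<le> (1 - \<beta>) ^ k + real k * \<delta>"
    proof -
      have "\<delta> \<le> \<beta>" using de unfolding \<epsilon>0_def by simp
      then have "(1 - \<beta> + \<delta>) ^ k \<le> (1 - \<beta>) ^ k + real k * \<delta>"
        using b1 d0 by (intro pow_close) auto
      then show ?thesis unfolding \<theta>_def by (simp add: algebra_simps)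
    qed
    have kdn: "real k * \<delta> * real n \<le> g2 / 2"
    proof -
      have "\<delta> \<le> g2 / (2 * real k * real n)" using de unfolding \<epsilon>0_def by simp
      then have "\<delta> * (2 * real k * real n) \<le> g2" using k1 n1 by (simp add: le_divide_eq)
      then show ?thesis by (simp add: algebra_simps)
    qed
    have bound: "int (card {v\<in>V. prefers_over_set P v a C}) \<le> \<lfloor>\<alpha> * real (card V)\<rfloor>"
      if aA: "a \<in> A - C" for a
    proof -
      have sub: "{v\<in>V. prefers_over_set P v a C} \<subseteq> {v\<in>V. mass A (P v) p a < \<beta> - \<delta>} \<union> {v\<in>V. U v \<inter> C = {}}"
      proof
        fix v assume v: "v \<in> {v\<in>V. prefers_over_set P v a C}"
        show "v \<in> {v\<in>V. mass A (P v) p a < \<beta> - \<delta>} \<union> {v\<in>V. U v \<inter> C = {}}"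
        proof (cases "U v \<inter> C = {}")
          case True then show ?thesis using v by auto
        next
          case False
          then obtain c where c: "c \<in> U v" "c \<in> C" by auto
          have "(a, c) \<in> P v" using v c(2) unfolding prefers_over_set_def by auto
          then have "mass A (P v) p a < \<theta>" using c(1) aA unfolding U_def by auto
          then show ?thesis using v unfolding \<theta>_def by auto
        qed
      qed
      have "card {v\<in>V. prefers_over_set P v a C} \<le> card ({v\<in>V. mass A (P v) p a < \<beta> - \<delta>} \<union> {v\<in>V. U v \<inter> C = {}})"
        using fV by (intro card_mono[OF _ sub]) auto
      also have "\<dots> \<le> card {v\<in>V. mass A (P v) p a < \<beta> - \<delta>} + card {v\<in>V. U v \<inter> C = {}}"
        by (rule card_Un_le)
      finally have "real (card {v\<in>V. prefers_over_set P v a C})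
          \<le> real (card {v\<in>V. mass A (P v) p a < \<beta> - \<delta>}) + real (card {v\<in>V. U v \<inter> C = {}})"
        by linarith
      also have "\<dots> \<le> \<beta> * real n + (1 - \<theta>) ^ k * real n"
      proof -
        have "a \<in> A" using aA by blast
        then have "real (card {v\<in>V. mass A (P v) p a < \<beta> - \<delta>}) \<le> \<beta> * real n"
          using pq unfolding n_def by blast
        moreover have "real (card {v\<in>V. U v \<inter> C = {}}) \<le> (1 - \<theta>) ^ k * real n"
          using C(3) unfolding n_def .
        ultimately show ?thesis by linarith
      qed
      also have "\<dots> \<le> \<beta> * real n + ((1 - \<beta>) ^ k + real k * \<delta>) * real n"
      proof -
        have "(1 - \<theta>) ^ k * real n \<le> ((1 - \<beta>) ^ k + real k * \<delta>) * real n"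
          using pw by (rule mult_right_mono) simp
        then show ?thesis by linarith
      qed
      also have "\<dots> = \<alpha> * real n + real k * \<delta> * real n" unfolding \<alpha>_def by (simp add: algebra_simps)
      also have "\<dots> < of_int \<lfloor>\<alpha> * real n\<rfloor> + 1" using lin_aux[OF kdn[unfolded g2_def] g2[unfolded g2_def]] .
      finally have "real (card {v\<in>V. prefers_over_set P v a C}) < of_int \<lfloor>\<alpha> * real n\<rfloor> + 1" .
      then have "int (card {v\<in>V. prefers_over_set P v a C}) < \<lfloor>\<alpha> * real n\<rfloor> + 1" by linarith
      then show ?thesis unfolding n_def by simp
    qed
    show ?thesis using C(1,2) bound unfolding undominated_def \<alpha>_def by auto
  qed
qed

end
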